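(* Let $a>0$, $a_N=a\ln N/N$, and for each $N$ let $P_{N,a_N}$ be the probability on sequences $(n_j)_{j\ge0}$ of nonnegative integers with $\sum_jn_j=N$ given by $P_{N,a_N}((n_j))\propto e^{-a_N\sum_jjn_j}$, with $\langle n_0\rangle_{N,a_N}$ the expectation of $n_0$. Then the critical value is $a_c=1$: for $a<1$, $\frac1N\langle n_0\rangle_{N,a_N}\to0$ (no BEC). For $a>1$ and $\lambda_N=1-m_N/N$ (integers $0\le m_N\le N$) with $0<\lim\lambda_N<1-a^{-1}$, $\lim_{N\to\infty}P_{N,a_N}(n_0/N\ge\lambda_N)=1$; moreover $\lim_{N\to\infty}\frac1N\langle n_0\rangle_{N,a_N}\ge1-\frac1a$.
   Context: This is the canonical ensemble of $N$ noninteracting bosons in a one-dimensional harmonic trap of scaled frequency $\omega\ln N/N$, with $a=\hbar\omega\beta$. *)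

theory Defs
  imports "HOL-Analysis.Analysis"
begin

definition configs :: "nat \<Rightarrow> (nat \<Rightarrow> nat) set" where
  "configs N = {n. finite {j. n j \<noteq> 0} \<and> (\<Sum>j\<in>{j. n j \<noteq> 0}. n j) = N}"

definition energy :: "(nat \<Rightarrow> nat) \<Rightarrow> nat" where
  "energy n = (\<Sum>j\<in>{j. n j \<noteq> 0}. j * n j)"

definition bweight :: "real \<Rightarrow> (nat \<Rightarrow> nat) \<Rightarrow> real" where
  "bweight b n = exp (- b * real (energy n))"

definition partfun :: "nat \<Rightarrow> real \<Rightarrow> real" where
  "partfun N b = infsum (bweight b) (configs N)"

definition cprob :: "nat \<Rightarrow> real \<Rightarrow> ((nat \<Rightarrow> nat) \<Rightarrow> bool) \<Rightarrow> real" where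
  "cprob N b A = infsum (bweight b) {n \<in> configs N. A n} / partfun N b"

definition mean_n0 :: "nat \<Rightarrow> real \<Rightarrow> real" where
  "mean_n0 N b = infsum (\<lambda>n. real (n 0) * bweight b n) (configs N) / partfun N b"

end

theory Submission
  imports Defs
begin


lemma supp_bound: "finite {j. (n::nat\<Rightarrow>nat) j \<noteq> 0} \<Longrightarrow> \<exists>K. \<forall>i\<ge>K. n i = 0"
proof -
  assume "finite {j. n j \<noteq> 0}"
  then obtain K where K: "{j. n j \<noteq> 0} \<subseteq> {..<K}" using finite_nat_bounded by presburger
  have "\<forall>i\<ge>K. n i = 0"
  proof (intro allI impI)
    fix i assume "K \<le> i"
    then have "i \<notin> {..<K}" by simp
    then show "n i = 0" using K by auto
  qed
  then show ?thesis by auto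
qed

lemma bnd: "\<forall>i\<ge>K. (n::nat\<Rightarrow>nat) i = 0 \<Longrightarrow> n x \<noteq> 0 \<Longrightarrow> x < K"
  by (metis not_le)

lemma supp_sum:
  fixes f :: "nat \<Rightarrow> nat" and n :: "nat \<Rightarrow> nat"
  assumes "\<forall>i\<ge>K. n i = 0"
  shows "(\<Sum>j\<in>{j. n j \<noteq> 0}. f j * n j) = (\<Sum>j<K. f j * n j)"
  by (rule sum.mono_neutral_left) (use bnd[OF assms] in auto)

lemma sum_ext:
  fixes f :: "nat \<Rightarrow> nat" and n :: "nat \<Rightarrow> nat"
  assumes "\<forall>i\<ge>K. n i = 0" "K \<le> K'"
  shows "(\<Sum>j<K'. f j * n j) = (\<Sum>j<K. f j * n j)"
proof -
  have "\<forall>i\<ge>K'. n i = 0" using assms by simp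
  then show ?thesis using supp_sum[OF assms(1)] supp_sum[of K' n f] by simp
qed

lemma sum_ext1:
  fixes n :: "nat \<Rightarrow> nat"
  assumes "\<forall>i\<ge>K. n i = 0" "K \<le> K'"
  shows "(\<Sum>j<K'. n j) = (\<Sum>j<K. n j)"
  using sum_ext[OF assms, of "\<lambda>_. 1"] by simp

lemma shift1: "(\<Sum>i<Suc K. g i) = g 0 + (\<Sum>i<K. g (Suc i))"
  by (rule sum.lessThan_Suc_shift)

lemma shift2: "(\<Sum>i<Suc (Suc K). g i) = g 0 + g 1 + (\<Sum>i<K. g (Suc (Suc i)))"
  by (simp only: sum.lessThan_Suc_shift) (simp add: add.assoc)

lemma configs_iff:
  fixes n :: "nat \<Rightarrow> nat"
  assumes "\<forall>i\<ge>K. n i = 0"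
  shows "n \<in> configs N \<longleftrightarrow> (\<Sum>j<K. n j) = N"
proof -
  have fin: "finite {j. n j \<noteq> 0}"
    by (rule finite_subset[of _ "{..<K}"]) (use bnd[OF assms] in auto)
  have "(\<Sum>j\<in>{j. n j \<noteq> 0}. n j) = (\<Sum>j<K. n j)"
    using supp_sum[OF assms, of "\<lambda>_. 1"] by simp
  then show ?thesis using fin unfolding configs_def by auto
qed

lemma energy_eq:
  fixes n :: "nat \<Rightarrow> nat"
  assumes "\<forall>i\<ge>K. n i = 0"
  shows "energy n = (\<Sum>j<K. j * n j)"
  unfolding energy_def using supp_sum[OF assms] by simp

lemma configs_bound:
  assumes "n \<in> configs N"
  obtains K where "\<forall>i\<ge>K. n i = 0" "(\<Sum>j<Suc (Suc K). n j) = N" "energy n = (\<Sum>j<Suc (Suc K). j * n j)"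
proof -
  obtain K where K: "\<forall>i\<ge>K. n i = 0" using assms supp_bound unfolding configs_def by blast
  have K2: "\<forall>i\<ge>Suc (Suc K). n i = 0" using K by simp
  show ?thesis using that[OF K] configs_iff[OF K2] energy_eq[OF K2] assms by blast
qed

lemma n01_le: assumes "n \<in> configs N" shows "n 0 + n 1 \<le> N"
proof -
  obtain K where K: "(\<Sum>j<Suc (Suc K). n j) = N" using configs_bound[OF assms] by blast
  then show ?thesis unfolding shift2 by linarith
qed

lemma n0_le: assumes "n \<in> configs N" shows "n 0 \<le> N"
  using n01_le[OF assms] by linarith


definition Tset :: "nat \<Rightarrow> nat \<Rightarrow> (nat \<Rightarrow> nat) set" where
  "Tset N j = {n \<in> configs N. N - j \<le> n 0}"
definition Dset :: "nat \<Rightarrow> nat \<Rightarrow> (nat \<Rightarrow> nat) set" where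
  "Dset N j = {n \<in> configs N. n 0 = N - j}"
definition down :: "(nat \<Rightarrow> nat) \<Rightarrow> (nat \<Rightarrow> nat)" where
  "down n = (\<lambda>i. if i = 0 then n 0 + n 1 else n (Suc i))"
definition up :: "nat \<Rightarrow> nat \<Rightarrow> (nat \<Rightarrow> nat) \<Rightarrow> (nat \<Rightarrow> nat)" where
  "up N j n = (\<lambda>i. if i = 0 then N - j else if i = 1 then j - (N - n 0) else n (i - 1))"

lemma up_props:
  assumes "n \<in> Tset N j" "j \<le> N"
  shows "up N j n \<in> Dset N j" "down (up N j n) = n" "energy (up N j n) = energy n + j"
proof -
  have c: "n \<in> configs N" and j: "N - j \<le> n 0" using assms unfolding Tset_def by auto
  obtain K where K: "\<forall>i\<ge>K. n i = 0" "(\<Sum>j<Suc (Suc K). n j) = N"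
    using configs_bound[OF c] by blast
  have K1: "\<forall>i\<ge>Suc K. n i = 0" using K(1) by simp
  have le: "n 0 \<le> N" using n0_le[OF c] .
  have Ku: "\<forall>i\<ge>Suc (Suc K). up N j n i = 0" using K(1) unfolding up_def by auto
  have sK: "(\<Sum>i<Suc K. n i) = N" using K(2) sum_ext1[OF K1, of "Suc (Suc K)"] by simp
  have "(\<Sum>i<Suc (Suc K). up N j n i) = (N - j) + (j - (N - n 0)) + (\<Sum>i<K. n (Suc i))"
    unfolding shift2 by (simp add: up_def)
  also have "\<dots> = n 0 + (\<Sum>i<K. n (Suc i))" using j le assms(2) by simp
  also have "\<dots> = N" using sK unfolding shift1 .
  finally have "up N j n \<in> configs N" using configs_iff[OF Ku] by blast
  then show "up N j n \<in> Dset N j" unfolding Dset_def up_def by simp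
  show "down (up N j n) = n" using j le assms(2) unfolding down_def up_def by (auto simp: fun_eq_iff)
  have "energy (up N j n) = (\<Sum>i<Suc (Suc K). i * up N j n i)" using energy_eq[OF Ku] .
  also have "\<dots> = (j - (N - n 0)) + (\<Sum>i<K. (Suc (Suc i)) * n (Suc i))"
    unfolding shift2 by (simp add: up_def)
  also have "(\<Sum>i<K. (Suc (Suc i)) * n (Suc i)) = (\<Sum>i<K. n (Suc i)) + (\<Sum>i<K. (Suc i) * n (Suc i))"
    by (simp add: sum.distrib)
  also have "(\<Sum>i<K. n (Suc i)) = N - n 0"
    using sK unfolding shift1 by simp
  also have "(\<Sum>i<K. (Suc i) * n (Suc i)) = energy n"
    using energy_eq[OF K1] unfolding shift1 by simp
  finally show "energy (up N j n) = energy n + j" using j le assms(2) by simp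
qed

lemma down_props:
  assumes "n \<in> Dset N j" "j \<le> N"
  shows "down n \<in> Tset N j" "up N j (down n) = n"
proof -
  have c: "n \<in> configs N" and j: "n 0 = N - j" using assms unfolding Dset_def by auto
  obtain K where K: "\<forall>i\<ge>K. n i = 0" "(\<Sum>j<Suc (Suc K). n j) = N"
    using configs_bound[OF c] by blast
  have le: "n 0 + n 1 \<le> N" using n01_le[OF c] .
  have Kd: "\<forall>i\<ge>Suc K. down n i = 0" using K(1) unfolding down_def by auto
  have "(\<Sum>i<Suc K. down n i) = n 0 + n 1 + (\<Sum>i<K. n (Suc (Suc i)))"
    unfolding shift1 by (simp add: down_def)
  also have "\<dots> = N" using K(2) unfolding shift2 .
  finally have "down n \<in> configs N" using configs_iff[OF Kd] by blast
  then show "down n \<in> Tset N j" unfolding Tset_def down_def using j by simp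
  show "up N j (down n) = n" using j le assms(2) unfolding down_def up_def
    by (auto simp: fun_eq_iff)
qed


lemma DT_has_sum:
  assumes "j \<le> N"
  shows "(bweight b has_sum s) (Dset N j) \<longleftrightarrow>
         ((\<lambda>n. exp (- b * real j) * bweight b n) has_sum s) (Tset N j)"
proof -
  have "((\<lambda>n. exp (- b * real j) * bweight b n) has_sum s) (Tset N j) \<longleftrightarrow>
        (bweight b has_sum s) (Dset N j)"
  proof (rule has_sum_reindex_bij_witness[where i = down and j = "up N j"])
    fix a assume a: "a \<in> Tset N j"
    show "down (up N j a) = a" "up N j a \<in> Dset N j" using up_props[OF a assms] by auto
    show "bweight b (up N j a) = exp (- b * real j) * bweight b a"
      using up_props(3)[OF a assms] unfolding bweight_def
      by (simp add: algebra_simps flip: exp_add)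
  next
    fix b' assume "b' \<in> Dset N j"
    then show "up N j (down b') = b'" "down b' \<in> Tset N j" using down_props assms by auto
  qed simp
  then show ?thesis by simp
qed

lemma DT_summable:
  assumes "j \<le> N"
  shows "bweight b summable_on (Dset N j) \<longleftrightarrow> bweight b summable_on (Tset N j)"
proof
  assume "bweight b summable_on Dset N j"
  then obtain s where "(bweight b has_sum s) (Dset N j)" unfolding summable_on_def by blast
  then have "((\<lambda>n. exp (- b * real j) * bweight b n) has_sum s) (Tset N j)" using DT_has_sum[OF assms] by simp
  then have "((\<lambda>n. exp (b * real j) * (exp (- b * real j) * bweight b n)) has_sum (exp (b * real j) * s)) (Tset N j)"
    by (rule has_sum_cmult_right)
  then have "(bweight b has_sum (exp (b * real j) * s)) (Tset N j)"
    by (simp add: mult.assoc[symmetric] flip: exp_add)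
  then show "bweight b summable_on (Tset N j)" unfolding summable_on_def by blast
next
  assume "bweight b summable_on Tset N j"
  then obtain s where "(bweight b has_sum s) (Tset N j)" unfolding summable_on_def by blast
  then have "((\<lambda>n. exp (- b * real j) * bweight b n) has_sum (exp (- b * real j) * s)) (Tset N j)"
    by (rule has_sum_cmult_right)
  then have "(bweight b has_sum (exp (- b * real j) * s)) (Dset N j)" using DT_has_sum[OF assms] by simp
  then show "bweight b summable_on (Dset N j)" unfolding summable_on_def by blast
qed

lemma DT_infsum:
  assumes "j \<le> N" "bweight b summable_on (Tset N j)"
  shows "infsum (bweight b) (Dset N j) = exp (- b * real j) * infsum (bweight b) (Tset N j)"
proof -
  have "((\<lambda>n. exp (- b * real j) * bweight b n) has_sum (exp (- b * real j) * infsum (bweight b) (Tset N j))) (Tset N j)"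
    by (rule has_sum_cmult_right) (use assms(2) in \<open>simp add: has_sum_infsum\<close>)
  then have "(bweight b has_sum (exp (- b * real j) * infsum (bweight b) (Tset N j))) (Dset N j)"
    using DT_has_sum[OF assms(1)] by simp
  then show ?thesis by (rule infsumI)
qed

definition delta :: "nat \<Rightarrow> nat \<Rightarrow> nat" where "delta N = (\<lambda>i. if i = 0 then N else 0)"

lemma delta_props: "delta N \<in> configs N" "energy (delta N) = 0"
proof -
  have B: "\<forall>i\<ge>Suc 0. delta N i = 0" unfolding delta_def by simp
  show "delta N \<in> configs N" using configs_iff[OF B] by (simp add: delta_def)
  show "energy (delta N) = 0" using energy_eq[OF B] by (simp add: delta_def)
qed

lemma T0: "Tset N 0 = {delta N}"
proof
  show "{delta N} \<subseteq> Tset N 0" using delta_props unfolding Tset_def delta_def by simp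
next
  show "Tset N 0 \<subseteq> {delta N}"
  proof
    fix n assume "n \<in> Tset N 0"
    then have c: "n \<in> configs N" and n0: "N \<le> n 0" unfolding Tset_def by auto
    obtain K where K: "\<forall>i\<ge>K. n i = 0" "(\<Sum>j<Suc (Suc K). n j) = N"
      using configs_bound[OF c] by blast
    have "n 0 + (\<Sum>i<Suc K. n (Suc i)) = N" using K(2) unfolding shift1[of _ "Suc K"] .
    then have z: "(\<Sum>i<Suc K. n (Suc i)) = 0" and e: "n 0 = N" using n0 by auto
    have "n (Suc i) = 0" for i
    proof (cases "i < Suc K")
      case True then show ?thesis using z by (auto simp: less_Suc_eq)
    next
      case False then show ?thesis using K(1) by simp
    qed
    then have "n = delta N" using e unfolding delta_def fun_eq_iff
      by (metis not0_implies_Suc)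
    then show "n \<in> {delta N}" by simp
  qed
qed

lemma T_Suc: "Suc j \<le> N \<Longrightarrow> Tset N (Suc j) = Tset N j \<union> Dset N (Suc j)"
  unfolding Tset_def Dset_def by auto

lemma T_disj: "Suc j \<le> N \<Longrightarrow> Tset N j \<inter> Dset N (Suc j) = {}"
  unfolding Tset_def Dset_def by auto

lemma TN: "Tset N N = configs N"
  unfolding Tset_def by auto

fun cc :: "real \<Rightarrow> nat \<Rightarrow> real" where
  "cc b 0 = 1"
| "cc b (Suc k) = cc b k / (1 - exp (- b * real (Suc k)))"

lemma cc_pos: "b > 0 \<Longrightarrow> 0 < cc b k"
proof (induction k)
  case (Suc k)
  have "exp (- b * real (Suc k)) < 1" using Suc.prems by simp
  then show ?case using Suc by simp
qed simp

lemma energy_down: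
  assumes "n \<in> Dset N k" "k \<le> N"
  shows "energy (down n) + k = energy n"
  using up_props(3)[OF down_props(1)[OF assms] assms(2)] down_props(2)[OF assms] by simp

lemma fin_bound:
  assumes b: "b > 0"
  shows "k \<le> N \<Longrightarrow> finite F \<Longrightarrow> F \<subseteq> Tset N k \<Longrightarrow> (\<forall>n\<in>F. energy n \<le> E)
          \<Longrightarrow> sum (bweight b) F \<le> cc b k"
proof (induction E arbitrary: k F rule: less_induct)
  case (less E)
  show ?case using less.prems
  proof (induction k arbitrary: F)
    case 0
    then have "F \<subseteq> {delta N}" using T0 by simp
    then have "F = {} \<or> F = {delta N}" by blast
    then show ?case by (auto simp: bweight_def delta_props)
  next
    case (Suc k)
    define F1 where "F1 = F \<inter> Tset N k"
    define F2 where "F2 = F \<inter> Dset N (Suc k)"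
    have FU: "F = F1 \<union> F2" using Suc.prems T_Suc[OF Suc.prems(1)] unfolding F1_def F2_def by auto
    have dj: "F1 \<inter> F2 = {}" using T_disj[OF Suc.prems(1)] unfolding F1_def F2_def by auto
    have fin1: "finite F1" "finite F2" using Suc.prems(2) unfolding F1_def F2_def by auto
    have s1: "sum (bweight b) F1 \<le> cc b k"
      using Suc.IH[of F1] Suc.prems unfolding F1_def by auto
    have F2D: "F2 \<subseteq> Dset N (Suc k)" unfolding F2_def by auto
    have inj: "inj_on down F2"
      by (rule inj_on_inverseI[where g = "up N (Suc k)"]) (use down_props(2) F2D Suc.prems(1) in auto)
    have "sum (bweight b) F2 = sum (\<lambda>n. bweight b (up N (Suc k) (down n))) F2"
      using down_props(2) F2D Suc.prems(1) by (intro sum.cong) auto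
    also have "\<dots> = sum (\<lambda>m. bweight b (up N (Suc k) m)) (down ` F2)"
      by (rule sum.reindex[OF inj, symmetric, unfolded comp_def])
    also have "\<dots> = sum (\<lambda>m. exp (- b * real (Suc k)) * bweight b m) (down ` F2)"
    proof (rule sum.cong)
      fix m assume "m \<in> down ` F2"
      then have m: "m \<in> Tset N (Suc k)" using down_props(1) F2D Suc.prems(1) by auto
      show "bweight b (up N (Suc k) m) = exp (- b * real (Suc k)) * bweight b m"
        using up_props(3)[OF m Suc.prems(1)] unfolding bweight_def
        by (simp add: algebra_simps flip: exp_add)
    qed simp
    also have "\<dots> = exp (- b * real (Suc k)) * sum (bweight b) (down ` F2)"
      by (simp add: sum_distrib_left)
    also have "\<dots> \<le> exp (- b * real (Suc k)) * cc b (Suc k)"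
    proof (cases "F2 = {}")
      case True
      have "0 \<le> exp (- b * real (Suc k)) * cc b (Suc k)"
        by (rule mult_nonneg_nonneg[OF _ less_imp_le[OF cc_pos[OF b]]]) simp
      then show ?thesis using True by simp
    next
      case False
      then obtain n where n: "n \<in> F2" by blast
      then have "Suc k \<le> E" using energy_down[of n N "Suc k"] F2D Suc.prems unfolding F2_def by force
      then have lt: "E - Suc k < E" by simp
      have "sum (bweight b) (down ` F2) \<le> cc b (Suc k)"
      proof (rule less.IH[OF lt Suc.prems(1)])
        show "finite (down ` F2)" using fin1 by simp
        show "down ` F2 \<subseteq> Tset N (Suc k)" using down_props(1) F2D Suc.prems(1) by auto
        show "\<forall>m\<in>down ` F2. energy m \<le> E - Suc k"
        proof
          fix m assume "m \<in> down ` F2"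
          then obtain n where "n \<in> F2" "m = down n" by blast
          then show "energy m \<le> E - Suc k"
            using energy_down[of n N "Suc k"] F2D Suc.prems unfolding F2_def by force
        qed
      qed
      then show ?thesis by (rule mult_left_mono) simp
    qed
    finally have s2: "sum (bweight b) F2 \<le> exp (- b * real (Suc k)) * cc b (Suc k)" .
    have q: "exp (- b * real (Suc k)) < 1" using b by simp
    have ne: "1 - exp (- b * real (Suc k)) \<noteq> 0" using q by linarith
    have "(1 - exp (- b * real (Suc k))) * cc b (Suc k)
          = (1 - exp (- b * real (Suc k))) * (cc b k / (1 - exp (- b * real (Suc k))))" by simp
    also have "\<dots> = cc b k" using ne by simp
    finally have cceq: "cc b (Suc k) - exp (- b * real (Suc k)) * cc b (Suc k) = cc b k"
      by (simp only: left_diff_distrib mult_1_left)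
    have "sum (bweight b) F = sum (bweight b) F1 + sum (bweight b) F2"
      using sum.union_disjoint[OF fin1 dj] FU by simp
    then show ?case using s1 s2 cceq by linarith
  qed
qed

lemma T_summable:
  assumes "b > 0" "j \<le> N"
  shows "bweight b summable_on (Tset N j)"
proof (rule nonneg_bdd_above_summable_on)
  show "bdd_above (sum (bweight b) ` {F. F \<subseteq> Tset N j \<and> finite F})"
  proof (rule bdd_aboveI)
    fix x assume "x \<in> sum (bweight b) ` {F. F \<subseteq> Tset N j \<and> finite F}"
    then obtain F where F: "F \<subseteq> Tset N j" "finite F" "x = sum (bweight b) F" by blast
    have "\<forall>n\<in>F. energy n \<le> Max (energy ` F)" using F(2) by simp
    then show "x \<le> cc b j" using fin_bound[OF assms(1) assms(2) F(2) F(1)] F(3) by simp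
  qed
qed (simp add: bweight_def)

lemma T_rec:
  assumes "b > 0" "Suc j \<le> N"
  shows "infsum (bweight b) (Tset N j) = (1 - exp (- b * real (Suc j))) * infsum (bweight b) (Tset N (Suc j))"
proof -
  have s1: "bweight b summable_on Tset N j" and s2: "bweight b summable_on Tset N (Suc j)"
    using T_summable assms by auto
  then have s3: "bweight b summable_on Dset N (Suc j)" using DT_summable[OF assms(2)] by simp
  have "infsum (bweight b) (Tset N (Suc j)) = infsum (bweight b) (Tset N j) + infsum (bweight b) (Dset N (Suc j))"
    unfolding T_Suc[OF assms(2)] by (rule infsum_Un_disjoint[OF s1 s3 T_disj[OF assms(2)]])
  then show ?thesis using DT_infsum[OF assms(2) s2] by (simp add: algebra_simps)
qed

lemma T0_val: "infsum (bweight b) (Tset N 0) = 1"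
  by (simp add: T0 bweight_def delta_props)

lemma bweight_nonneg: "0 \<le> bweight b n" unfolding bweight_def by simp

lemma T_le_Z: "infsum (bweight b) (Tset N j) \<le> partfun N b" if "b > 0" "j \<le> N"
  unfolding partfun_def
  by (rule infsum_mono_neutral[OF T_summable[OF that]])
     (use T_summable[of b N N] that TN bweight_nonneg in \<open>auto simp: Tset_def\<close>)

lemma Z_ge1: "b > 0 \<Longrightarrow> 1 \<le> partfun N b"
  using T_le_Z[of b 0 N] T0_val by simp


definition tt :: "nat \<Rightarrow> real \<Rightarrow> nat \<Rightarrow> real" where
  "tt N b j = infsum (bweight b) (Tset N j)"

lemma tt_N: "tt N b N = partfun N b"
  unfolding tt_def partfun_def TN ..

lemma tt_nonneg: "0 \<le> tt N b j"
  unfolding tt_def by (rule infsum_nonneg) (simp add: bweight_nonneg)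

lemma tt_lower:
  assumes b: "b > 0"
  shows "m + d = N \<Longrightarrow> partfun N b - tt N b m \<le> real d * exp (- b * real (Suc m)) * partfun N b"
proof (induction d arbitrary: m)
  case 0 then show ?case using tt_N by simp
next
  case (Suc d)
  have "Suc m + d = N" using Suc.prems by simp
  then have IH: "partfun N b - tt N b (Suc m) \<le> real d * exp (- b * real (Suc (Suc m))) * partfun N b"
    by (rule Suc.IH)
  have Z0: "0 \<le> partfun N b" using Z_ge1[OF b, of N] by simp
  have "exp (- b * real (Suc (Suc m))) \<le> exp (- b * real (Suc m))" using b by simp
  then have "real d * exp (- b * real (Suc (Suc m))) * partfun N b \<le> real d * exp (- b * real (Suc m)) * partfun N b"
    using Z0 by (intro mult_right_mono mult_left_mono) auto
  note f1 = this
  have "tt N b m = (1 - exp (- b * real (Suc m))) * tt N b (Suc m)"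
    unfolding tt_def using T_rec[OF b, of m N] Suc.prems by simp
  then have f2: "tt N b m = tt N b (Suc m) - exp (- b * real (Suc m)) * tt N b (Suc m)"
    by (simp add: algebra_simps)
  have "tt N b (Suc m) \<le> partfun N b" unfolding tt_def using T_le_Z[OF b, of "Suc m" N] Suc.prems by simp
  then have f3: "exp (- b * real (Suc m)) * tt N b (Suc m) \<le> exp (- b * real (Suc m)) * partfun N b"
    by (rule mult_left_mono) simp
  have f4: "real (Suc d) * exp (- b * real (Suc m)) * partfun N b
     = real d * exp (- b * real (Suc m)) * partfun N b + exp (- b * real (Suc m)) * partfun N b"
    by (simp add: algebra_simps)
  show ?case using IH f1 f2 f3 f4 by linarith
qed

lemma tt_upper:
  assumes b: "b > 0"
  shows "m + d = N \<Longrightarrow> tt N b m \<le> (1 - exp (- b * real N)) ^ d * partfun N b"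
proof (induction d arbitrary: m)
  case 0 then show ?case using tt_N by simp
next
  case (Suc d)
  have "Suc m + d = N" using Suc.prems by simp
  then have IH: "tt N b (Suc m) \<le> (1 - exp (- b * real N)) ^ d * partfun N b"
    by (rule Suc.IH)
  have e1: "exp (- b * real N) \<le> exp (- b * real (Suc m))" using b Suc.prems by simp
  have e2: "exp (- b * real N) \<le> 1" using b by simp
  have "tt N b m = (1 - exp (- b * real (Suc m))) * tt N b (Suc m)"
    unfolding tt_def using T_rec[OF b, of m N] Suc.prems by simp
  also have "\<dots> \<le> (1 - exp (- b * real N)) * tt N b (Suc m)"
    using e1 tt_nonneg[of N b "Suc m"] by (intro mult_right_mono) auto
  also have "\<dots> \<le> (1 - exp (- b * real N)) * ((1 - exp (- b * real N)) ^ d * partfun N b)"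
    using IH e2 by (intro mult_left_mono) auto
  finally show ?case by simp
qed

lemma cprob_eq:
  assumes "N > 0" "m \<le> N"
  shows "cprob N b (\<lambda>n. real (n 0) / real N \<ge> 1 - real m / real N) = tt N b m / partfun N b"
proof -
  have "{n \<in> configs N. real (n 0) / real N \<ge> 1 - real m / real N} = Tset N m"
  proof -
    have "real (n 0) / real N \<ge> 1 - real m / real N \<longleftrightarrow> N - m \<le> n 0" for n :: "nat \<Rightarrow> nat"
    proof -
      have "real (n 0) / real N \<ge> 1 - real m / real N \<longleftrightarrow>
            real (n 0) / real N * real N \<ge> (1 - real m / real N) * real N"
        using assms by (simp only: mult_le_cancel_right_pos of_nat_0_less_iff)
      also have "\<dots> \<longleftrightarrow> real (n 0) \<ge> real N - real m"
        using assms by (simp add: algebra_simps)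
      also have "\<dots> \<longleftrightarrow> real N \<le> real (n 0 + m)" unfolding of_nat_add by linarith
      also have "\<dots> \<longleftrightarrow> N \<le> n 0 + m" by (simp only: of_nat_le_iff)
      also have "\<dots> \<longleftrightarrow> N - m \<le> n 0" by arith
      finally show ?thesis .
    qed
    then show ?thesis unfolding Tset_def by auto
  qed
  then show ?thesis unfolding cprob_def tt_def by simp
qed

lemma n0w_summable:
  assumes "b > 0"
  shows "(\<lambda>n. real (n 0) * bweight b n) summable_on configs N"
proof (rule summable_on_comparison_test)
  show "(\<lambda>n. real N * bweight b n) summable_on configs N"
    by (rule summable_on_cmult_right) (use T_summable[OF assms, of N N] TN in simp)
  fix n assume "n \<in> configs N"
  then show "real (n 0) * bweight b n \<le> real N * bweight b n"
    using n0_le by (intro mult_right_mono) (auto simp: bweight_nonneg)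
  show "0 \<le> real (n 0) * bweight b n" by (simp add: bweight_nonneg)
qed

lemma mean_lower:
  assumes b: "b > 0" and m: "m \<le> N"
  shows "real (N - m) * tt N b m / partfun N b \<le> mean_n0 N b"
proof -
  have sT: "bweight b summable_on Tset N m" using T_summable[OF b m] .
  have "real (N - m) * tt N b m = infsum (\<lambda>n. real (N - m) * bweight b n) (Tset N m)"
    unfolding tt_def by (rule infsum_cmult_right[symmetric]) (use sT in simp)
  also have "\<dots> \<le> infsum (\<lambda>n. real (n 0) * bweight b n) (configs N)"
  proof (rule infsum_mono_neutral)
    show "(\<lambda>n. real (N - m) * bweight b n) summable_on Tset N m" by (rule summable_on_cmult_right[OF sT])
    show "(\<lambda>n. real (n 0) * bweight b n) summable_on configs N" by (rule n0w_summable[OF b])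
    fix n assume "n \<in> Tset N m \<inter> configs N"
    then have "N - m \<le> n 0" unfolding Tset_def by auto
    then show "real (N - m) * bweight b n \<le> real (n 0) * bweight b n"
      by (intro mult_right_mono) (auto simp: bweight_nonneg)
  next
    fix n assume "n \<in> Tset N m - configs N" then show "real (N - m) * bweight b n \<le> 0"
      unfolding Tset_def by auto
  next
    fix n assume "n \<in> configs N - Tset N m" then show "0 \<le> real (n 0) * bweight b n"
      by (simp add: bweight_nonneg)
  qed
  finally have "real (N - m) * tt N b m \<le> infsum (\<lambda>n. real (n 0) * bweight b n) (configs N)" .
  then have "real (N - m) * tt N b m / partfun N b \<le> infsum (\<lambda>n. real (n 0) * bweight b n) (configs N) / partfun N b"
    by (rule divide_right_mono) (use Z_ge1[OF b, of N] in simp)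
  then show ?thesis unfolding mean_n0_def by simp
qed

lemma mean_upper:
  assumes b: "b > 0" and m: "m \<le> N"
  shows "mean_n0 N b \<le> real N * tt N b m / partfun N b + real (N - m)"
proof -
  define C where "C = configs N - Tset N m"
  have U: "configs N = Tset N m \<union> C" and dj: "Tset N m \<inter> C = {}" unfolding C_def Tset_def by auto
  have s: "(\<lambda>n. real (n 0) * bweight b n) summable_on configs N" by (rule n0w_summable[OF b])
  have sT: "(\<lambda>n. real (n 0) * bweight b n) summable_on Tset N m"
    by (rule summable_on_subset[OF s]) (auto simp: Tset_def)
  have sC: "(\<lambda>n. real (n 0) * bweight b n) summable_on C"
    by (rule summable_on_subset[OF s]) (auto simp: C_def)
  have wT: "bweight b summable_on Tset N m" using T_summable[OF b m] .
  have wZ: "bweight b summable_on configs N" using T_summable[OF b, of N N] TN by simp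
  have wC: "bweight b summable_on C" by (rule summable_on_subset[OF wZ]) (auto simp: C_def)
  have e1: "infsum (\<lambda>n. real (n 0) * bweight b n) (configs N)
        = infsum (\<lambda>n. real (n 0) * bweight b n) (Tset N m) + infsum (\<lambda>n. real (n 0) * bweight b n) C"
    unfolding U by (rule infsum_Un_disjoint[OF sT sC dj])
  have e2: "infsum (\<lambda>n. real (n 0) * bweight b n) (Tset N m) \<le> infsum (\<lambda>n. real N * bweight b n) (Tset N m)"
  proof (rule infsum_mono[OF sT summable_on_cmult_right[OF wT]])
    fix n assume "n \<in> Tset N m"
    then have "n 0 \<le> N" using n0_le unfolding Tset_def by auto
    then show "real (n 0) * bweight b n \<le> real N * bweight b n"
      by (intro mult_right_mono) (auto simp: bweight_nonneg)
  qed
  have e3: "infsum (\<lambda>n. real N * bweight b n) (Tset N m) = real N * tt N b m"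
    unfolding tt_def by (rule infsum_cmult_right) (use wT in simp)
  have e4: "infsum (\<lambda>n. real (n 0) * bweight b n) C \<le> infsum (\<lambda>n. real (N - m) * bweight b n) C"
  proof (rule infsum_mono[OF sC summable_on_cmult_right[OF wC]])
    fix n assume "n \<in> C"
    then have "n 0 \<le> N - m" unfolding C_def Tset_def by auto
    then show "real (n 0) * bweight b n \<le> real (N - m) * bweight b n"
      by (intro mult_right_mono) (auto simp: bweight_nonneg)
  qed
  have e5: "infsum (\<lambda>n. real (N - m) * bweight b n) C = real (N - m) * infsum (bweight b) C"
    by (rule infsum_cmult_right) (use wC in simp)
  have e6: "infsum (bweight b) C \<le> partfun N b"
    unfolding partfun_def
    by (rule infsum_mono_neutral[OF wC wZ]) (auto simp: C_def bweight_nonneg)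
  have e7: "real (N - m) * infsum (bweight b) C \<le> real (N - m) * partfun N b"
    using e6 by (rule mult_left_mono) simp
  have I: "infsum (\<lambda>n. real (n 0) * bweight b n) (configs N) \<le> real N * tt N b m + real (N - m) * partfun N b"
    using e1 e2 e3 e4 e5 e7 by linarith
  have Zp: "0 < partfun N b" using Z_ge1[OF b, of N] by simp
  have "mean_n0 N b \<le> (real N * tt N b m + real (N - m) * partfun N b) / partfun N b"
    unfolding mean_n0_def by (rule divide_right_mono[OF I]) (use Zp in simp)
  also have "\<dots> = real N * tt N b m / partfun N b + real (N - m)"
    using Zp by (simp add: add_divide_distrib)
  finally show ?thesis .
qed



lemma exp_powr:
  assumes "N \<ge> 1"
  shows "exp (- (a * ln (real N) / real N) * real m) = real N powr (- (a * real m / real N))"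
  using assms by (simp add: powr_def)

lemma b_pos: "a > 0 \<Longrightarrow> N \<ge> 2 \<Longrightarrow> 0 < a * ln (real N) / real N"
  by (intro divide_pos_pos mult_pos_pos) auto

lemma exp_neg_le_powr:
  assumes "N \<ge> 1" "d > 0"
  shows "exp (- (real N powr d)) \<le> real N powr (- d)"
proof -
  have y: "0 < real N powr d" using assms by simp
  have "real N powr d \<le> exp (real N powr d)" using exp_ge_add_one_self[of "real N powr d"] by linarith
  then have "1 / exp (real N powr d) \<le> 1 / real N powr d"
    using y by (intro divide_left_mono) auto
  then show ?thesis using assms by (simp add: exp_minus powr_minus divide_inverse)
qed

lemma partB:
  fixes a :: real and m :: "nat \<Rightarrow> nat"
  assumes a: "a > 1" and mN: "\<forall>N. m N \<le> N"
    and lim: "(\<lambda>N. real (m N) / real N) \<longlonglongrightarrow> \<mu>" and amu: "a * \<mu> > 1"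
  shows "(\<lambda>N. tt N (a * ln (real N) / real N) (m N) / partfun N (a * ln (real N) / real N)) \<longlonglongrightarrow> 1"
proof -
  define c where "c = (a * \<mu> + 1) / 2"
  have c1: "c > 1" using amu unfolding c_def by (simp add: field_simps mult.commute)
  have cmu: "c < a * \<mu>" using amu unfolding c_def by (simp add: field_simps mult.commute)
  have "(\<lambda>N. a * (real (m N) / real N)) \<longlonglongrightarrow> a * \<mu>" by (rule tendsto_mult_left[OF lim])
  then have ev1: "eventually (\<lambda>N. c < a * (real (m N) / real N)) sequentially"
    using cmu by (rule order_tendstoD(1))
  have ev2: "eventually (\<lambda>N. N \<ge> (2::nat)) sequentially" by (rule eventually_ge_at_top)
  define g where "g N = 1 - real N powr (1 - c)" for N :: nat
  have gl: "g \<longlonglongrightarrow> 1 - 0" unfolding g_def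
    by (intro tendsto_diff tendsto_const tendsto_neg_powr filterlim_real_sequentially) (use c1 in simp)
  show ?thesis
  proof (rule tendsto_sandwich[OF _ _ gl[simplified] tendsto_const])
    show "eventually (\<lambda>N. tt N (a * ln (real N) / real N) (m N) / partfun N (a * ln (real N) / real N) \<le> 1) sequentially"
      using ev2
    proof (rule eventually_mono)
      fix N :: nat assume N: "N \<ge> 2"
      define b where "b = a * ln (real N) / real N"
      have b: "b > 0" unfolding b_def using b_pos[of a N] a N by simp
      have "tt N b (m N) \<le> partfun N b" unfolding tt_def using T_le_Z[OF b, of "m N" N] mN by simp
      moreover have "0 < partfun N b" using Z_ge1[OF b, of N] by simp
      ultimately show "tt N b (m N) / partfun N b \<le> 1" by simp
    qed
    show "eventually (\<lambda>N. g N \<le> tt N (a * ln (real N) / real N) (m N) / partfun N (a * ln (real N) / real N)) sequentially"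
      using eventually_conj[OF ev1 ev2]
    proof (rule eventually_mono)
      fix N :: nat assume N: "c < a * (real (m N) / real N) \<and> N \<ge> 2"
      define b where "b = a * ln (real N) / real N"
      have b: "b > 0" unfolding b_def using b_pos[of a N] a N by simp
      define Z where "Z = partfun N b"
      have Z: "0 < Z" using Z_ge1[OF b, of N] unfolding Z_def by simp
      have "Z - tt N b (m N) \<le> real (N - m N) * exp (- b * real (Suc (m N))) * Z"
        using tt_lower[OF b, of "m N" "N - m N" N] mN unfolding Z_def by simp
      then have l1: "1 - real (N - m N) * exp (- b * real (Suc (m N))) \<le> tt N b (m N) / Z"
        using Z by (simp add: field_simps)
      have e1: "exp (- b * real (Suc (m N))) \<le> exp (- b * real (m N))" using b by simp
      have e2: "real (N - m N) \<le> real N" by simp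
      have f1: "real (N - m N) * exp (- b * real (Suc (m N))) \<le> real N * exp (- b * real (m N))"
        using e1 e2 by (intro mult_mono) auto
      have f2: "exp (- b * real (m N)) = real N powr (- (a * real (m N) / real N))"
        unfolding b_def using exp_powr[of N a "m N"] N by simp
      have f3: "real N powr (- (a * real (m N) / real N)) \<le> real N powr (- c)"
        using N by (intro powr_mono) auto
      have f4: "real N * real N powr (- c) = real N powr (1 - c)"
        using N by (simp add: powr_diff powr_minus divide_inverse)
      have "real N * exp (- b * real (m N)) \<le> real N * real N powr (- c)"
        unfolding f2 using f3 by (rule mult_left_mono) simp
      then have "real (N - m N) * exp (- b * real (Suc (m N))) \<le> real N powr (1 - c)"
        using f1 f4 by linarith
      then show "g N \<le> tt N b (m N) / partfun N b"
        using l1 unfolding g_def Z_def by linarith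
    qed
  qed
qed


lemma mean_nonneg: "b > 0 \<Longrightarrow> 0 \<le> mean_n0 N b"
  using mean_lower[of b N N] by simp

lemma partA:
  fixes a :: real
  assumes a0: "a > 0" and a1: "a < 1"
  shows "(\<lambda>N. mean_n0 N (a * ln (real N) / real N) / real N) \<longlonglongrightarrow> 0"
proof -
  define d where "d = (1 - a) / 2"
  have d: "d > 0" "1 - d - a = d" "-a + (1 - d) = d" using a1 unfolding d_def by (auto simp: field_simps)
  define h where "h N = 2 * real N powr (- d) + 1 / real N" for N :: nat
  have hl: "h \<longlonglongrightarrow> 2 * 0 + 0" unfolding h_def
    by (intro tendsto_add tendsto_mult tendsto_const tendsto_neg_powr filterlim_real_sequentially lim_1_over_n)
       (use d in simp)
  show ?thesis
  proof (rule tendsto_sandwich[OF _ _ tendsto_const hl[simplified]])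
    show "eventually (\<lambda>N. 0 \<le> mean_n0 N (a * ln (real N) / real N) / real N) sequentially"
      using eventually_ge_at_top[of "2::nat"]
      by (rule eventually_mono) (use b_pos[OF a0] mean_nonneg in simp)
    show "eventually (\<lambda>N. mean_n0 N (a * ln (real N) / real N) / real N \<le> h N) sequentially"
      using eventually_ge_at_top[of "2::nat"]
    proof (rule eventually_mono)
      fix N :: nat assume N: "N \<ge> 2"
      define b where "b = a * ln (real N) / real N"
      have b: "b > 0" unfolding b_def using b_pos[of a N] a0 N by simp
      define Z where "Z = partfun N b"
      have Z: "0 < Z" using Z_ge1[OF b, of N] unfolding Z_def by simp
      define k where "k = nat \<lceil>real N powr (1 - d)\<rceil>"
      have Npos: "real N \<ge> 1" using N by simp
      have "real N powr (1 - d) \<le> real N powr 1" using Npos d by (intro powr_mono) auto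
      then have kN: "k \<le> N" unfolding k_def using Npos by simp
      have kge: "real N powr (1 - d) \<le> real k" unfolding k_def by (rule real_nat_ceiling_ge)
      have kle: "real k \<le> real N powr (1 - d) + 1"
      proof -
        have "0 \<le> real N powr (1 - d)" by simp
        then have "0 \<le> \<lceil>real N powr (1 - d)\<rceil>" by linarith
        then have "real (nat \<lceil>real N powr (1 - d)\<rceil>) = real_of_int \<lceil>real N powr (1 - d)\<rceil>"
          by (rule of_nat_nat)
        then show ?thesis using of_int_ceiling_le_add_one[of "real N powr (1 - d)"] unfolding k_def by simp
      qed
      define m where "m = N - k"
      have mN: "m \<le> N" and Nm: "N - m = k" using kN unfolding m_def by auto
      define e where "e = exp (- b * real N)"
      have e: "e = real N powr (- a)" unfolding e_def b_def using exp_powr[of N a N] N by simp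
      have e0: "0 < e" "e \<le> 1" unfolding e_def using b by auto
      have M1: "mean_n0 N b \<le> real N * tt N b m / Z + real k"
        using mean_upper[OF b mN] Nm unfolding Z_def by simp
      have "tt N b m \<le> (1 - e) ^ k * Z"
        using tt_upper[OF b, of m k N] Nm mN unfolding e_def Z_def by simp
      then have M2: "tt N b m / Z \<le> (1 - e) ^ k" using Z by (simp add: divide_simps)
      have "(1 - e) ^ k \<le> exp (- e) ^ k"
        using e0 exp_ge_add_one_self[of "- e"] by (intro power_mono) auto
      also have "\<dots> = exp (- (e * real k))" by (simp add: exp_of_nat_mult[symmetric] mult.commute)
      also have "\<dots> \<le> exp (- (real N powr d))"
      proof -
        have "e * real N powr (1 - d) \<le> e * real k" using kge e0 by (intro mult_left_mono) auto
        moreover have "e * real N powr (1 - d) = real N powr d"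
          unfolding e by (simp only: powr_add[symmetric] d(3))
        ultimately show ?thesis by simp
      qed
      also have "\<dots> \<le> real N powr (- d)" by (rule exp_neg_le_powr) (use N d in auto)
      finally have M3: "tt N b m / Z \<le> real N powr (- d)" using M2 by linarith
      have "real k / real N \<le> (real N powr (1 - d) + 1) / real N"
        using kle Npos by (intro divide_right_mono) auto
      also have "\<dots> = real N powr (- d) + 1 / real N"
        using Npos by (simp add: add_divide_distrib powr_diff powr_minus_divide)
      finally have M4: "real k / real N \<le> real N powr (- d) + 1 / real N" .
      have "mean_n0 N b / real N \<le> (real N * tt N b m / Z + real k) / real N"
        using M1 Npos by (intro divide_right_mono) auto
      also have "\<dots> = tt N b m / Z + real k / real N"
        using Npos by (simp add: add_divide_distrib)
      finally show "mean_n0 N b / real N \<le> h N"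
        using M3 M4 unfolding h_def b_def by linarith
    qed
  qed
qed


lemma partC:
  fixes a :: real
  assumes a: "a > 1"
  shows "ereal (1 - 1 / a) \<le> liminf (\<lambda>N. ereal (mean_n0 N (a * ln (real N) / real N) / real N))"
proof -
  have key: "ereal L \<le> liminf (\<lambda>N. ereal (mean_n0 N (a * ln (real N) / real N) / real N))"
    if L: "0 < L" "L < 1 - 1 / a" for L
  proof -
    define m where "m N = nat \<lfloor>(1 - L) * real N\<rfloor>" for N
    have "0 < 1 / a" using a by simp
    then have L1: "L < 1" using L by linarith
    have r0: "0 \<le> (1 - L) * real N" for N using L1 by (intro mult_nonneg_nonneg) auto
    have mle: "real (m N) \<le> (1 - L) * real N" for N
      unfolding m_def by (rule of_nat_floor[OF r0])
    have mge: "(1 - L) * real N - 1 \<le> real (m N)" for N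
    proof -
      have "0 \<le> \<lfloor>(1 - L) * real N\<rfloor>" using r0[of N] by simp
      then have "real (m N) = real_of_int \<lfloor>(1 - L) * real N\<rfloor>" unfolding m_def by (rule of_nat_nat)
      then show ?thesis using real_of_int_floor_ge_diff_one[of "(1 - L) * real N"] by linarith
    qed
    have mN: "\<forall>N. m N \<le> N"
    proof
      fix N
      have "(1 - L) * real N \<le> 1 * real N" using L by (intro mult_right_mono) auto
      then have "real (m N) \<le> real N" using mle[of N] by linarith
      then show "m N \<le> N" by simp
    qed
    have mlim: "(\<lambda>N. real (m N) / real N) \<longlonglongrightarrow> 1 - L"
    proof (rule tendsto_sandwich)
      show "eventually (\<lambda>N. (1 - L) - 1 / real N \<le> real (m N) / real N) sequentially"
        using eventually_ge_at_top[of "1::nat"]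
      proof (rule eventually_mono)
        fix N :: nat assume N: "N \<ge> 1"
        have "((1 - L) * real N - 1) / real N \<le> real (m N) / real N"
          using mge[of N] N by (intro divide_right_mono) auto
        then show "(1 - L) - 1 / real N \<le> real (m N) / real N" using N by (simp add: diff_divide_distrib)
      qed
      show "eventually (\<lambda>N. real (m N) / real N \<le> 1 - L) sequentially"
        using eventually_ge_at_top[of "1::nat"]
      proof (rule eventually_mono)
        fix N :: nat assume N: "N \<ge> 1"
        have "real (m N) / real N \<le> (1 - L) * real N / real N"
          using mle[of N] N by (intro divide_right_mono) auto
        then show "real (m N) / real N \<le> 1 - L" using N by simp
      qed
      show "(\<lambda>N. (1 - L) - 1 / real N) \<longlonglongrightarrow> 1 - L"
        using tendsto_diff[OF tendsto_const lim_1_over_n, of "1 - L"] by simp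
    qed (rule tendsto_const)
    have amu: "a * (1 - L) > 1"
    proof -
      have "1 / a < 1 - L" using L by linarith
      then show ?thesis using a by (simp add: field_simps)
    qed
    have P: "(\<lambda>N. tt N (a * ln (real N) / real N) (m N) / partfun N (a * ln (real N) / real N)) \<longlonglongrightarrow> 1"
      by (rule partB[OF a mN mlim amu])
    define f where "f N = (1 - real (m N) / real N) * (tt N (a * ln (real N) / real N) (m N) / partfun N (a * ln (real N) / real N))" for N
    have fl: "f \<longlonglongrightarrow> (1 - (1 - L)) * 1" unfolding f_def
      by (intro tendsto_mult tendsto_diff tendsto_const mlim P)
    then have fl': "(\<lambda>N. ereal (f N)) \<longlonglongrightarrow> ereal L" by (simp add: tendsto_ereal)
    have "eventually (\<lambda>N. ereal (f N) \<le> ereal (mean_n0 N (a * ln (real N) / real N) / real N)) sequentially"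
      using eventually_ge_at_top[of "2::nat"]
    proof (rule eventually_mono)
      fix N :: nat assume N: "N \<ge> 2"
      define b where "b = a * ln (real N) / real N"
      have b: "b > 0" unfolding b_def using b_pos[of a N] a N by simp
      have M: "real (N - m N) * tt N b (m N) / partfun N b \<le> mean_n0 N b"
        using mean_lower[OF b, of "m N" N] mN by simp
      have "real (N - m N) = real N - real (m N)" using mN by (simp add: of_nat_diff)
      then have eq: "real (N - m N) / real N = 1 - real (m N) / real N" using N by (simp add: diff_divide_distrib)
      have "f N = (real (N - m N) / real N) * (tt N b (m N) / partfun N b)"
        unfolding f_def b_def eq by (rule refl)
      also have "\<dots> = real (N - m N) * tt N b (m N) / partfun N b / real N" by simp
      also have "\<dots> \<le> mean_n0 N b / real N" using M N by (intro divide_right_mono) auto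
      finally show "ereal (f N) \<le> ereal (mean_n0 N (a * ln (real N) / real N) / real N)"
        unfolding b_def by simp
    qed
    then have "liminf (\<lambda>N. ereal (f N)) \<le> liminf (\<lambda>N. ereal (mean_n0 N (a * ln (real N) / real N) / real N))"
      by (rule Liminf_mono)
    moreover have "liminf (\<lambda>N. ereal (f N)) = ereal L"
      by (rule lim_imp_Liminf[OF _ fl']) simp
    ultimately show ?thesis by simp
  qed
  show ?thesis
  proof (rule dense_le_bounded[of "ereal 0"])
    show "ereal 0 < ereal (1 - 1 / a)" using a by simp
    fix w assume w: "ereal 0 < w" "w < ereal (1 - 1 / a)"
    then obtain L where wL: "w = ereal L" by (cases w) auto
    then show "w \<le> liminf (\<lambda>N. ereal (mean_n0 N (a * ln (real N) / real N) / real N))"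
      using key[of L] w by simp
  qed
qed


theorem corollary2:
  fixes a :: real
  assumes "a > 0"
  defines "aN \<equiv> (\<lambda>N::nat. a * ln (real N) / real N)"
  shows "(a < 1 \<longrightarrow> ((\<lambda>N. mean_n0 N (aN N) / real N) \<longlonglongrightarrow> 0))
       \<and> (a > 1 \<longrightarrow>
            (\<forall>(m :: nat \<Rightarrow> nat) (L :: real).
               (\<forall>N. m N \<le> N) \<longrightarrow>
               ((\<lambda>N. 1 - real (m N) / real N) \<longlonglongrightarrow> L) \<longrightarrow>
               0 < L \<longrightarrow> L < 1 - 1 / a \<longrightarrow>
               ((\<lambda>N. cprob N (aN N)
                   (\<lambda>n. real (n 0) / real N \<ge> 1 - real (m N) / real N)) \<longlonglongrightarrow> 1))
          \<and> liminf (\<lambda>N. ereal (mean_n0 N (aN N) / real N)) \<ge> ereal (1 - 1 / a))"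
proof -
  have A: "a < 1 \<longrightarrow> ((\<lambda>N. mean_n0 N (aN N) / real N) \<longlonglongrightarrow> 0)"
    unfolding aN_def using partA[OF assms(1)] by simp
  have B: "\<forall>(m :: nat \<Rightarrow> nat) (L :: real).
               (\<forall>N. m N \<le> N) \<longrightarrow>
               ((\<lambda>N. 1 - real (m N) / real N) \<longlonglongrightarrow> L) \<longrightarrow>
               0 < L \<longrightarrow> L < 1 - 1 / a \<longrightarrow>
               ((\<lambda>N. cprob N (aN N)
                   (\<lambda>n. real (n 0) / real N \<ge> 1 - real (m N) / real N)) \<longlonglongrightarrow> 1)"
    if a1: "a > 1"
  proof (intro allI impI)
    fix m :: "nat \<Rightarrow> nat" and L :: real
    assume mN: "\<forall>N. m N \<le> N" and lim: "(\<lambda>N. 1 - real (m N) / real N) \<longlonglongrightarrow> L"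
      and L: "0 < L" "L < 1 - 1 / a"
    have "(\<lambda>N. 1 - (1 - real (m N) / real N)) \<longlonglongrightarrow> 1 - L"
      by (rule tendsto_diff[OF tendsto_const lim])
    then have mlim: "(\<lambda>N. real (m N) / real N) \<longlonglongrightarrow> 1 - L" by simp
    have amu: "a * (1 - L) > 1"
    proof -
      have "1 / a < 1 - L" using L by linarith
      then show ?thesis using a1 by (simp add: field_simps)
    qed
    have P: "(\<lambda>N. tt N (a * ln (real N) / real N) (m N) / partfun N (a * ln (real N) / real N)) \<longlonglongrightarrow> 1"
      by (rule partB[OF a1 mN mlim amu])
    show "(\<lambda>N. cprob N (aN N) (\<lambda>n. real (n 0) / real N \<ge> 1 - real (m N) / real N)) \<longlonglongrightarrow> 1"
    proof (rule Lim_transform_eventually[OF P])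
      show "eventually (\<lambda>N. tt N (a * ln (real N) / real N) (m N) / partfun N (a * ln (real N) / real N) =
              cprob N (aN N) (\<lambda>n. real (n 0) / real N \<ge> 1 - real (m N) / real N)) sequentially"
        using eventually_ge_at_top[of "1::nat"]
      proof (rule eventually_mono)
        fix N :: nat assume "N \<ge> 1"
        then show "tt N (a * ln (real N) / real N) (m N) / partfun N (a * ln (real N) / real N) =
              cprob N (aN N) (\<lambda>n. real (n 0) / real N \<ge> 1 - real (m N) / real N)"
          unfolding aN_def using cprob_eq[of N "m N" "a * ln (real N) / real N"] mN by simp
      qed
    qed
  qed
  have C: "liminf (\<lambda>N. ereal (mean_n0 N (aN N) / real N)) \<ge> ereal (1 - 1 / a)" if a1: "a > 1"
    unfolding aN_def using partC[OF a1] by simp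
  show ?thesis using A B C by blast
qed

end
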